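(* Let $\mathcal H$ be a real Hilbert space, $t_0>0$, let $f:\mathcal H\to\mathbb R$ be convex and $\mathcal C^1$ with $L$-Lipschitz continuous gradient and with a minimizer $x^\star$; set $\bar f=\inf_{\mathcal H}f$. Let $\alpha>3$, $\gamma>0$, $\beta\ge0$, set $\beta(t)=\gamma+\beta/t$, let $b\in]0,\alpha-1]$ and $$a(t)=t^2\left(1+\frac{(\alpha-b)\gamma t-\beta(\alpha+1-b)}{t^2-\alpha\gamma t-\beta(\alpha+1)}\right),\qquad m(t)=\max\big(t,\,L|a(t)\beta(t)|,\,L|a(t)|\beta(t)^2\big).$$ Let $e\in\mathcal C([t_0,+\infty[;\mathcal H)$ with $m(\cdot)e(\cdot)\in L^1(t_0,+\infty;\mathcal H)$, and let $x$ be a solution of $$\ddot x(t)+\frac\alpha t\dot x(t)+\nabla f\big(x(t)+\beta(t)\dot x(t)\big)+e(t)=0.$$ Define $$E(t)=a(t)\big(f(x(t)+\beta(t)\dot x(t))-\bar f\big)+\tfrac12\|b(x(t)-x^\star)+t\dot x(t)\|^2+\tfrac{b(\alpha-1-b)}{2}\|x(t)-x^\star\|^2.$$ Then $\sup_{t\ge t_0}E(t)<+\infty$, $\sup_{t\ge t_0}t\|\dot x(t)\|<+\infty$ and $\sup_{t\ge t_0}\|x(t)-x^\star\|<+\infty$. *)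

theory Defs
  imports "HOL-Analysis.Analysis"
begin

definition betaf :: "real \<Rightarrow> real \<Rightarrow> real \<Rightarrow> real" where
  "betaf \<gamma> \<beta> t = \<gamma> + \<beta> / t"

definition acoef :: "real \<Rightarrow> real \<Rightarrow> real \<Rightarrow> real \<Rightarrow> real \<Rightarrow> real" where
  "acoef \<alpha> \<gamma> \<beta> b t =
     t\<^sup>2 * (1 + ((\<alpha> - b) * \<gamma> * t - \<beta> * (\<alpha> + 1 - b)) / (t\<^sup>2 - \<alpha> * \<gamma> * t - \<beta> * (\<alpha> + 1)))"

definition mfun :: "real \<Rightarrow> real \<Rightarrow> real \<Rightarrow> real \<Rightarrow> real \<Rightarrow> real \<Rightarrow> real" where
  "mfun L \<alpha> \<gamma> \<beta> b t =
     max t (max (L * \<bar>acoef \<alpha> \<gamma> \<beta> b t * betaf \<gamma> \<beta> t\<bar>)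
                (L * \<bar>acoef \<alpha> \<gamma> \<beta> b t\<bar> * (betaf \<gamma> \<beta> t)\<^sup>2))"

end

theory Submission
  imports Defs
begin

lemma conv_tangent:
  fixes f :: "'H::real_inner \<Rightarrow> real"
  assumes cf: "convex_on UNIV f" and df: "(f has_derivative (\<lambda>h. G \<bullet> h)) (at y)"
  shows "f y + G \<bullet> (w - y) \<le> f w"
proof -
  define d where "d = w - y"
  let ?g = "\<lambda>s::real. f (y + s *\<^sub>R d)"
  have cg: "convex_on UNIV ?g"
  proof (rule convex_onI)
    fix t a b :: real assume t: "0 < t" "t < 1"
    have "y + ((1 - t) *\<^sub>R a + t *\<^sub>R b) *\<^sub>R d = (1 - t) *\<^sub>R (y + a *\<^sub>R d) + t *\<^sub>R (y + b *\<^sub>R d)"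
      by (simp add: algebra_simps)
    then show "?g ((1 - t) *\<^sub>R a + t *\<^sub>R b) \<le> (1 - t) * ?g a + t * ?g b"
      using convex_onD[OF cf, of t "y + a *\<^sub>R d" "y + b *\<^sub>R d"] t by simp
  qed simp
  have "((\<lambda>s. y + s *\<^sub>R d) has_derivative (\<lambda>h. h *\<^sub>R d)) (at 0)"
    by (auto intro!: derivative_eq_intros)
  moreover have "(f has_derivative (\<lambda>h. G \<bullet> h)) (at (y + 0 *\<^sub>R d))" using df by simp
  ultimately have "(?g has_derivative (\<lambda>h. G \<bullet> (h *\<^sub>R d))) (at 0)"
    by (rule diff_chain_at[unfolded o_def])
  then have "(?g has_field_derivative (G \<bullet> d)) (at 0 within UNIV)"
    unfolding has_field_derivative_def
    by (rule has_derivative_eq_rhs) (auto simp: fun_eq_iff)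
  from convex_on_imp_above_tangent[OF cg _ _ _ this, of 1]
  have "?g 1 - ?g 0 \<ge> G \<bullet> d" by simp
  then show ?thesis by (simp add: d_def)
qed


lemma gronwall_bdd:
  fixes \<phi> \<phi>' G :: "real \<Rightarrow> real"
  assumes T: "t0 < T" "0 < T"
    and pos: "\<And>t. t \<ge> T \<Longrightarrow> \<phi> t > 0"
    and dphi: "\<And>t. t \<ge> T \<Longrightarrow> (\<phi> has_real_derivative \<phi>' t) (at t)"
    and ineq: "\<And>t. t \<ge> T \<Longrightarrow> \<phi>' t \<le> (K / t\<^sup>2 + C * G t) * \<phi> t"
    and KC: "K \<ge> 0" "C \<ge> 0"
    and Gc: "continuous_on {t0..} G" and Gi: "G integrable_on {t0..}"
    and Gnn: "\<And>t. t \<ge> t0 \<Longrightarrow> G t \<ge> 0"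
  shows "\<exists>M. \<forall>t\<ge>T. \<phi> t \<le> M"
proof -
  define I where "I s = integral {t0..s} G" for s
  define \<psi> where "\<psi> s = ln (\<phi> s) + K / s - C * I s" for s
  have dI: "(I has_real_derivative G s) (at s)" if "s \<ge> T" for s
  proof -
    have "continuous_on {t0..s+1} G" using Gc by (rule continuous_on_subset) auto
    from integral_has_real_derivative[OF this, of s] that T
    have "(I has_real_derivative G s) (at s within {t0..s+1})" by (simp add: I_def[abs_def])
    moreover have "at s within {t0..s+1} = at s"
      using that T by (intro at_within_interior) auto
    ultimately show ?thesis by simp
  qed
  have dpsi: "\<exists>y. DERIV \<psi> s :> y \<and> y \<le> 0" if "T \<le> s" for s
  proof -
    have s0: "s > 0" "\<phi> s > 0" using that T pos by auto
    have "DERIV \<psi> s :> (\<phi>' s / \<phi> s + (- K / s\<^sup>2) - C * G s)"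
      unfolding \<psi>_def[abs_def]
      using s0 dphi[OF that] dI[OF that]
      by (auto intro!: derivative_eq_intros simp: power2_eq_square)
    moreover have "\<phi>' s / \<phi> s \<le> K / s\<^sup>2 + C * G s"
      using ineq[OF that] s0 by (simp add: divide_le_eq)
    ultimately show ?thesis by (intro exI[of _ "\<phi>' s / \<phi> s + (- K / s\<^sup>2) - C * G s"]) auto
  qed
  define Itot where "Itot = integral {t0..} G"
  have "\<phi> t \<le> exp (\<psi> T + C * Itot)" if "t \<ge> T" for t
  proof -
    have "\<psi> t \<le> \<psi> T" using DERIV_nonpos_imp_nonincreasing[of T t \<psi>] that dpsi by auto
    moreover have "I t \<le> Itot" unfolding I_def Itot_def
      by (rule integral_subset_le) (use Gi Gnn in \<open>auto intro: integrable_on_subinterval\<close>)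
    moreover have "K / t \<ge> 0" using KC that T by auto
    ultimately have "ln (\<phi> t) \<le> \<psi> T + C * Itot"
      unfolding \<psi>_def using KC mult_left_mono[of "I t" Itot C] by linarith
    then have "exp (ln (\<phi> t)) \<le> exp (\<psi> T + C * Itot)" by simp
    then show ?thesis using pos that by simp
  qed
  then show ?thesis by blast
qed


lemma deriv_norm2:
  fixes w :: "real \<Rightarrow> 'H::real_inner"
  assumes "(w has_vector_derivative w') (at t)"
  shows "((\<lambda>s. (norm (w s))\<^sup>2) has_real_derivative 2 * (w t \<bullet> w')) (at t)"
proof -
  have "((\<lambda>s. w s \<bullet> w s) has_derivative (\<lambda>h. w t \<bullet> (h *\<^sub>R w') + (h *\<^sub>R w') \<bullet> w t)) (at t)"
    using assms unfolding has_vector_derivative_def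
    by (rule has_derivative_inner[OF _ assms[unfolded has_vector_derivative_def]])
  then have "((\<lambda>s. w s \<bullet> w s) has_real_derivative 2 * (w t \<bullet> w')) (at t)"
    unfolding has_field_derivative_def
    by (rule has_derivative_eq_rhs) (auto simp: fun_eq_iff inner_commute)
  then show ?thesis by (simp add: power2_norm_eq_inner)
qed

lemma grad_zero:
  fixes f :: "'H::real_inner \<Rightarrow> real"
  assumes "(f has_derivative (\<lambda>h. G \<bullet> h)) (at xs)" "\<And>y. f xs \<le> f y"
  shows "G = 0"
proof -
  have "(\<lambda>h. G \<bullet> h) = (\<lambda>v. 0)"
    by (rule differential_zero_maxmin[of xs UNIV]) (use assms in auto)
  then have "G \<bullet> G = 0" by metis
  then show ?thesis by simp
qed

lemma deriv_comp:
  fixes f :: "'H::real_inner \<Rightarrow> real"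
  assumes "(f has_derivative (\<lambda>h. G \<bullet> h)) (at (y t))" "(y has_vector_derivative y') (at t)"
  shows "((\<lambda>s. f (y s)) has_real_derivative G \<bullet> y') (at t)"
proof -
  have "((\<lambda>s. f (y s)) has_derivative (\<lambda>h. G \<bullet> (h *\<^sub>R y'))) (at t)"
    using diff_chain_at[OF assms(2)[unfolded has_vector_derivative_def] assms(1)] by (simp add: o_def)
  then show ?thesis unfolding has_field_derivative_def
    by (rule has_derivative_eq_rhs) (auto simp: fun_eq_iff)
qed

lemma vv_ident:
  fixes X Z G Ee :: "'a::real_inner" and t \<alpha> :: real
  assumes "t \<noteq> 0"
  shows "(2 *\<^sub>R Z + t *\<^sub>R X) \<bullet> (2 *\<^sub>R X + (X + t *\<^sub>R (- ((\<alpha>/t) *\<^sub>R X) - G - Ee)))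
     = 2*(3-\<alpha>)*(Z \<bullet> X) - 2*t*(Z \<bullet> G) - 2*t*(Z \<bullet> Ee) + t*(3-\<alpha>)*(X \<bullet> X) - t\<^sup>2*(X \<bullet> G) - t\<^sup>2*(X \<bullet> Ee)"
  using assms by (simp add: inner_add_left inner_add_right inner_diff_left inner_diff_right inner_commute[of X Z] algebra_simps power2_eq_square)

lemma core:
  fixes f :: "'H::{real_inner, complete_space} \<Rightarrow> real" and gradf :: "'H \<Rightarrow> 'H"
    and x x' x'' e :: "real \<Rightarrow> 'H" and xs :: 'H and t0 L \<alpha> \<gamma> \<beta> T1 Cw :: real
    and G :: "real \<Rightarrow> real"
  assumes t0: "t0 > 0" and convex: "convex_on UNIV f"
    and grad: "\<And>y. (f has_derivative (\<lambda>h. gradf y \<bullet> h)) (at y)"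
    and L: "L \<ge> 0" and lip: "\<And>y z. norm (gradf y - gradf z) \<le> L * norm (y - z)"
    and minimizer: "\<And>y. f xs \<le> f y"
    and alpha: "\<alpha> > 3" and gamma: "\<gamma> > 0" and beta: "\<beta> \<ge> 0"
    and dx: "\<And>t. t > t0 \<Longrightarrow> (x has_vector_derivative x' t) (at t)"
    and ddx: "\<And>t. t > t0 \<Longrightarrow> (x' has_vector_derivative x'' t) (at t)"
    and ode: "\<And>t. t > t0 \<Longrightarrow> x'' t + (\<alpha> / t) *\<^sub>R x' t + gradf (x t + betaf \<gamma> \<beta> t *\<^sub>R x' t) + e t = 0"
    and Gc: "continuous_on {t0..} G" and Gi: "G integrable_on {t0..}" and Gnn: "\<And>t. t \<ge> t0 \<Longrightarrow> G t \<ge> 0"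
    and Cw: "Cw \<ge> 0" and w1: "\<And>t. t \<ge> T1 \<Longrightarrow> t * norm (e t) \<le> Cw * G t"
    and w2: "\<And>t. t \<ge> T1 \<Longrightarrow> L * t\<^sup>2 * norm (e t) \<le> Cw * G t"
  shows "\<exists>T M. \<forall>t\<ge>T. t\<^sup>2 * (f (x t + betaf \<gamma> \<beta> t *\<^sub>R x' t) - f xs) \<le> M
            \<and> norm (x t - xs) \<le> M \<and> t * norm (x' t) \<le> M"
proof -
  define B where "B t = \<gamma> + \<beta> / t" for t
  define y where "y t = x t + B t *\<^sub>R x' t" for t
  define z where "z t = x t - xs" for t
  define v where "v t = 2 *\<^sub>R z t + t *\<^sub>R x' t" for t
  define F where "F t = f (y t) - f xs" for t
  define g where "g t = gradf (y t)" for t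
  define N where "N t = t\<^sup>2 - 2*\<gamma>*t - 2*\<beta>" for t
  define D where "D t = t\<^sup>2 - \<alpha>*\<gamma>*t - (\<alpha>+1)*\<beta>" for t
  define a where "a t = t\<^sup>2 * N t / D t" for t
  define ad where "ad t = ((2*t*N t + t\<^sup>2*(2*t - 2*\<gamma>))*D t - t\<^sup>2*N t*(2*t - \<alpha>*\<gamma>))/(D t)\<^sup>2" for t
  define E where "E t = a t * F t + 1/2 * (norm (v t))\<^sup>2 + (\<alpha> - 3) * (norm (z t))\<^sup>2" for t
  define \<phi> where "\<phi> t = 1 + E t" for t
  define p where "p = (\<alpha> - 2) * \<gamma>"
  define K where "K = 8 * p"
  define C\<phi> where "C\<phi> = 3 + 2 / (\<alpha> - 3)"
  define C where "C = C\<phi> * Cw * (2 * (\<gamma> + \<beta>) * (1 + \<gamma> + \<beta>) + 3)"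
  define T where "T = max (max (t0 + 1) (max T1 1)) (2*\<alpha>*\<gamma> + 2*(\<alpha>+1)*\<beta> + 2)"
  have gxs: "gradf xs = 0" using grad_zero[OF grad minimizer] .
  have Bb: "B t = betaf \<gamma> \<beta> t" for t by (simp add: B_def betaf_def)
  have T: "T > t0" "T \<ge> 1" "T \<ge> T1" "T \<ge> 2*\<alpha>*\<gamma> + 2*(\<alpha>+1)*\<beta> + 2" unfolding T_def by auto
  have KC: "K \<ge> 0" "C \<ge> 0" "C\<phi> \<ge> 0" "p \<ge> 0"
    using alpha gamma beta Cw by (auto simp: K_def C_def C\<phi>_def p_def)
  have big: "t > t0 \<and> t \<ge> 1 \<and> D t \<ge> t\<^sup>2/2 \<and> N t \<ge> t\<^sup>2/2 \<and> N t \<le> t\<^sup>2 \<and> D t \<le> t\<^sup>2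
      \<and> a t \<le> 2*t\<^sup>2 \<and> a t \<ge> t\<^sup>2/2 \<and> B t \<le> \<gamma> + \<beta> \<and> B t \<ge> \<gamma> \<and> F t \<ge> 0" if "t \<ge> T" for t
  proof -
    have t1: "t > t0" "t \<ge> 1" using T that by auto
    have h1: "t/2 - \<alpha>*\<gamma> \<ge> (\<alpha>+1)*\<beta> + 1" using T(4) that by (simp add: algebra_simps)
    have "t*(t/2 - \<alpha>*\<gamma>) \<ge> 1*((\<alpha>+1)*\<beta> + 1)"
      by (rule mult_mono) (use t1 h1 alpha beta in auto)
    then have h2: "t*(t/2 - \<alpha>*\<gamma>) \<ge> (\<alpha>+1)*\<beta> + 1" by simp
    have Dg: "D t \<ge> t\<^sup>2/2"
    proof -
      have "D t - t\<^sup>2/2 = t*(t/2 - \<alpha>*\<gamma>) - (\<alpha>+1)*\<beta>" by (simp add: D_def power2_eq_square algebra_simps)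
      then show ?thesis using h2 by linarith
    qed
    have "2*\<gamma> \<le> \<alpha>*\<gamma>" using alpha gamma by (intro mult_right_mono) auto
    then have "t*(t/2 - 2*\<gamma>) \<ge> t*(t/2 - \<alpha>*\<gamma>)" using t1 by (intro mult_left_mono) auto
    moreover have "2*\<beta> \<le> (\<alpha>+1)*\<beta>" using alpha beta by (intro mult_right_mono) auto
    moreover have "N t - t\<^sup>2/2 = t*(t/2 - 2*\<gamma>) - 2*\<beta>" by (simp add: N_def power2_eq_square algebra_simps)
    ultimately have Ng: "N t \<ge> t\<^sup>2/2" using h2 by linarith
    have "0 \<le> \<gamma> * t" "0 \<le> \<alpha> * \<gamma> * t" "0 \<le> (\<alpha>+1)*\<beta>" using t1 t0 alpha gamma beta by auto
    then have Nl: "N t \<le> t\<^sup>2" and Dl: "D t \<le> t\<^sup>2" using beta by (auto simp: N_def D_def)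
    have Dp: "D t > 0" proof -
      have "t\<^sup>2 > 0" using t1 by simp
      then show ?thesis using Dg by linarith
    qed
    have "a t \<le> 2*t\<^sup>2 \<longleftrightarrow> t\<^sup>2 * N t \<le> (2*t\<^sup>2) * D t" using Dp by (simp add: a_def divide_le_eq)
    moreover have "t\<^sup>2 * N t \<le> t\<^sup>2 * (2 * D t)" using Nl Dg by (intro mult_left_mono) auto
    ultimately have al: "a t \<le> 2*t\<^sup>2" by simp
    have "a t \<ge> t\<^sup>2/2 \<longleftrightarrow> t\<^sup>2/2 * D t \<le> t\<^sup>2 * N t" using Dp by (simp add: a_def le_divide_eq)
    moreover have "t\<^sup>2 * (D t / 2) \<le> t\<^sup>2 * N t" using Ng Dl by (intro mult_left_mono) auto
    ultimately have ag: "a t \<ge> t\<^sup>2/2" by simp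
    have "\<beta> / t \<le> \<beta>" using t1 beta by (simp add: divide_le_eq mult_le_cancel_left1)
    moreover have "\<beta> / t \<ge> 0" using t1 beta by simp
    ultimately have "B t \<le> \<gamma> + \<beta>" "B t \<ge> \<gamma>" by (auto simp: B_def)
    moreover have "F t \<ge> 0" using minimizer by (simp add: F_def)
    ultimately show ?thesis using t1 Dg Ng Nl Dl al ag by auto
  qed
  have Eprops: "E t \<ge> a t * F t \<and> E t \<ge> 1/2 * (norm (v t))\<^sup>2 \<and> E t \<ge> (\<alpha> - 3) * (norm (z t))\<^sup>2 \<and> E t \<ge> 0"
    if "t \<ge> T" for t
  proof -
    have "a t * F t \<ge> 0" using big[OF that] by (intro mult_nonneg_nonneg) (auto intro: order.trans[rotated])
    moreover have "(\<alpha> - 3) * (norm (z t))\<^sup>2 \<ge> 0" using alpha by simp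
    moreover have "1/2 * (norm (v t))\<^sup>2 \<ge> 0" by simp
    ultimately show ?thesis unfolding E_def by linarith
  qed
  have sq: "r \<le> 1 + r\<^sup>2" for r :: real
  proof (cases "r \<le> 1")
    case True then show ?thesis by (smt (verit) zero_le_power2)
  next
    case False then have "r * 1 \<le> r * r" by (intro mult_left_mono) auto
    then show ?thesis by (simp add: power2_eq_square)
  qed
  have zbound: "norm (z t) \<le> C\<phi> * \<phi> t \<and> t * norm (x' t) \<le> C\<phi> * \<phi> t" if "t \<ge> T" for t
  proof -
    define q where "q = 1 / (\<alpha> - 3)"
    have q: "q > 0" using alpha by (simp add: q_def)
    have ee: "E t \<ge> 0" "E t \<ge> 1/2 * (norm (v t))\<^sup>2" "E t \<ge> (\<alpha> - 3) * (norm (z t))\<^sup>2"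
      using Eprops[OF that] by auto
    have "(norm (z t))\<^sup>2 \<le> E t / (\<alpha> - 3)" using ee(3) alpha by (simp add: le_divide_eq mult.commute)
    then have z2: "(norm (z t))\<^sup>2 \<le> q * E t" by (simp add: q_def)
    have qe: "q * E t \<ge> 0" using q ee by simp
    have Cexp: "C\<phi> * \<phi> t = 3 + 3 * E t + 2 * q + 2 * (q * E t)"
      by (simp add: C\<phi>_def \<phi>_def q_def algebra_simps add_divide_distrib)
    have zb: "norm (z t) \<le> 1 + q * E t" using sq[of "norm (z t)"] z2 by linarith
    have "t * norm (x' t) = norm (t *\<^sub>R x' t)" using big[OF that] by simp
    also have "t *\<^sub>R x' t = v t - 2 *\<^sub>R z t" by (simp add: v_def)
    also have "norm \<dots> \<le> norm (v t) + 2 * norm (z t)" by (metis norm_triangle_ineq4 norm_scaleR abs_numeral)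
    finally have A: "t * norm (x' t) \<le> norm (v t) + 2 * norm (z t)" .
    have "(norm (v t))\<^sup>2 \<le> 2 * E t" using ee by linarith
    then have "norm (v t) \<le> 1 + 2 * E t" using sq[of "norm (v t)"] by linarith
    then have "t * norm (x' t) \<le> 3 + 2 * E t + 2 * (q * E t)" using A zb by linarith
    then show ?thesis using Cexp zb ee qe q by linarith
  qed
  define Ed where "Ed t = ad t * F t + a t * (g t \<bullet> (x' t + (- \<beta> / t\<^sup>2) *\<^sub>R x' t + B t *\<^sub>R x'' t))
      + 1/2 * (2 * (v t \<bullet> (2 *\<^sub>R x' t + (x' t + t *\<^sub>R x'' t))))
      + (\<alpha> - 3) * (2 * (z t \<bullet> x' t))" for t
  have dE: "(\<phi> has_real_derivative Ed t) (at t)" if "t \<ge> T" for t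
  proof -
    have tt0: "t > t0" "t > 0" using big[OF that] t0 by auto
    then have "t\<^sup>2 > 0" by simp
    then have "D t > 0" using big[OF that] by linarith
    then have tt: "t > t0" "t > 0" "D t > 0" using tt0 by auto
    note dx1 = dx[OF tt(1)] and ddx1 = ddx[OF tt(1)]
    have dz: "(z has_vector_derivative x' t) (at t)"
      unfolding z_def[abs_def] using dx1 by (auto intro!: derivative_eq_intros)
    have dB: "(B has_real_derivative (- \<beta> / t\<^sup>2)) (at t)"
      unfolding B_def[abs_def] using tt by (auto intro!: derivative_eq_intros simp: power2_eq_square)
    have dy: "(y has_vector_derivative (x' t + (- \<beta> / t\<^sup>2) *\<^sub>R x' t + B t *\<^sub>R x'' t)) (at t)"
      unfolding y_def[abs_def]
      by (rule derivative_eq_intros dx1 ddx1 dB has_vector_derivative_scaleR[OF dB ddx1] | simp add: algebra_simps)+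
    have dv: "(v has_vector_derivative (2 *\<^sub>R x' t + (x' t + t *\<^sub>R x'' t))) (at t)"
      unfolding v_def[abs_def]
      by (rule derivative_eq_intros dz ddx1 | simp add: algebra_simps)+
    have dF: "(F has_real_derivative (g t \<bullet> (x' t + (- \<beta> / t\<^sup>2) *\<^sub>R x' t + B t *\<^sub>R x'' t))) (at t)"
      using DERIV_diff[OF deriv_comp[OF grad dy] DERIV_const[of "f xs"]]
      by (simp add: F_def[abs_def] g_def)
    have da: "(a has_real_derivative ad t) (at t)"
    proof -
      have dN: "(N has_real_derivative (2*t - 2*\<gamma>)) (at t)"
        unfolding N_def[abs_def] by (auto intro!: derivative_eq_intros)
      have dD: "(D has_real_derivative (2*t - \<alpha>*\<gamma>)) (at t)"
        unfolding D_def[abs_def] by (auto intro!: derivative_eq_intros)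
      have dtN: "((\<lambda>s. s\<^sup>2 * N s) has_real_derivative (2*t*N t + t\<^sup>2*(2*t - 2*\<gamma>))) (at t)"
        using DERIV_mult[OF DERIV_pow[of 2 t] dN] by (simp add: mult.commute)
      have "D t \<noteq> 0" using tt by simp
      from DERIV_divide[OF dtN dD this]
      show ?thesis unfolding a_def[abs_def] ad_def by (simp add: power2_eq_square mult.commute)
    qed
    have "((\<lambda>s. 1 + (a s * F s + 1/2 * (norm (v s))\<^sup>2 + (\<alpha> - 3) * (norm (z s))\<^sup>2)) has_real_derivative Ed t) (at t)"
      unfolding Ed_def
      by (rule derivative_eq_intros da dF deriv_norm2[OF dv] deriv_norm2[OF dz] refl)+ simp_all
    then show ?thesis by (simp add: \<phi>_def[abs_def] E_def[abs_def])
  qed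
  have Ed_le: "Ed t \<le> (K / t\<^sup>2 + C * G t) * \<phi> t" if tT: "t \<ge> T" for t
  proof -
    note bg = big[OF tT]
    have tt0: "t > t0" "t > 0" "t \<ge> 1" using bg t0 by auto
    then have t2p: "t\<^sup>2 > 0" by simp
    then have Dp: "D t > 0" using bg by linarith
    have gB: "gradf (x t + betaf \<gamma> \<beta> t *\<^sub>R x' t) = g t" by (simp add: g_def y_def Bb)
    have xdd: "x'' t = - ((\<alpha>/t) *\<^sub>R x' t) - g t - e t"
      using ode[OF tt0(1)] unfolding gB by (simp add: algebra_simps eq_neg_iff_add_eq_0)
    define c where "c = 1 + (- \<beta> / t\<^sup>2) - B t * (\<alpha> / t)"
    have yd: "x' t + (- \<beta> / t\<^sup>2) *\<^sub>R x' t + B t *\<^sub>R x'' t = c *\<^sub>R x' t - B t *\<^sub>R g t - B t *\<^sub>R e t"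
      unfolding xdd c_def by (simp add: algebra_simps)
    have ct: "c * t\<^sup>2 = D t" unfolding c_def B_def D_def using tt0 by (simp add: field_simps power2_eq_square)
    have "a t * c = N t * (c * t\<^sup>2) / D t" by (simp add: a_def mult_ac)
    then have ac: "a t * c = N t" using ct Dp by simp
    have e1: "a t * (g t \<bullet> (x' t + (- \<beta> / t\<^sup>2) *\<^sub>R x' t + B t *\<^sub>R x'' t))
        = N t * (g t \<bullet> x' t) - a t * B t * (g t \<bullet> g t) - a t * B t * (g t \<bullet> e t)"
      unfolding yd ac[symmetric] by (simp add: inner_diff_right algebra_simps)
    have e2: "v t \<bullet> (2 *\<^sub>R x' t + (x' t + t *\<^sub>R x'' t)) = 2*(3-\<alpha>)*(z t \<bullet> x' t) - 2*t*(z t \<bullet> g t)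
        - 2*t*(z t \<bullet> e t) + t*(3-\<alpha>)*(x' t \<bullet> x' t) - t\<^sup>2*(x' t \<bullet> g t) - t\<^sup>2*(x' t \<bullet> e t)"
      unfolding v_def xdd using vv_ident[of t "z t" "x' t" \<alpha> "g t" "e t"] tt0 by simp
    have zy: "z t = (y t - xs) - B t *\<^sub>R x' t" by (simp add: z_def y_def)
    have e3: "z t \<bullet> g t = (y t - xs) \<bullet> g t - B t * (x' t \<bullet> g t)"
      unfolding zy by (simp add: inner_diff_left)
    have NB: "N t = t\<^sup>2 - 2 * t * B t" using tt0 by (simp add: N_def B_def field_simps)
    have Ed_eq: "Ed t = ad t * F t - a t * B t * (g t \<bullet> g t) - a t * B t * (g t \<bullet> e t)
        - 2*t*((y t - xs) \<bullet> g t) - 2*t*(z t \<bullet> e t) + t*(3-\<alpha>)*(x' t \<bullet> x' t) - t\<^sup>2*(x' t \<bullet> e t)"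
      unfolding Ed_def e1 e2 e3 NB by (simp add: inner_commute[of "x' t" "g t"] algebra_simps)
    have b1: "F t \<le> (y t - xs) \<bullet> g t"
      using conv_tangent[OF convex grad[of "y t"], of xs] by (simp add: F_def g_def inner_diff_right inner_commute)
    have b2: "a t * B t * (g t \<bullet> g t) \<ge> 0" using bg gamma
      by (intro mult_nonneg_nonneg) (auto intro: order.trans[rotated])
    have b3: "t*(3-\<alpha>)*(x' t \<bullet> x' t) \<le> 0"
    proof -
      have "t*(3-\<alpha>) \<le> 0" using tt0 alpha by (intro mult_nonneg_nonpos) auto
      from mult_nonpos_nonneg[OF this inner_ge_zero[of "x' t"]] show ?thesis .
    qed
    have b4: "(ad t - 2*t) * F t \<le> K / t\<^sup>2 * E t"
    proof -
      define P where "P = p*t^3 - 2*p*\<alpha>*\<gamma>*t\<^sup>2 - ((\<alpha>-1)*\<beta>*\<alpha>*\<gamma> + 3*p*(\<alpha>+1)*\<beta>)*t - 2*(\<alpha>-1)*\<beta>*(\<alpha>+1)*\<beta>"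
      have pid: "((2*t*N t + t\<^sup>2*(2*t - 2*\<gamma>))*D t - t\<^sup>2*N t*(2*t - \<alpha>*\<gamma>)) - 2*t*(D t)\<^sup>2 = t * P"
        unfolding N_def D_def P_def p_def by algebra
      have D2: "(D t)\<^sup>2 > 0" using Dp by simp
      have "ad t - 2*t = (((2*t*N t + t\<^sup>2*(2*t - 2*\<gamma>))*D t - t\<^sup>2*N t*(2*t - \<alpha>*\<gamma>)) - 2*t*(D t)\<^sup>2) / (D t)\<^sup>2"
        using D2 by (simp add: ad_def diff_divide_distrib)
      then have num: "ad t - 2*t = t * P / (D t)\<^sup>2" using pid by simp
      have ab: "0 \<le> \<alpha>" "0 \<le> \<alpha> - 1" using alpha by auto
      have nn1: "0 \<le> 2*p*\<alpha>*\<gamma>*t\<^sup>2" using KC ab gamma by simp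
      have nn2: "0 \<le> ((\<alpha>-1)*\<beta>*\<alpha>*\<gamma> + 3*p*(\<alpha>+1)*\<beta>)*t"
        using KC ab gamma beta tt0 by (intro mult_nonneg_nonneg add_nonneg_nonneg) auto
      have nn3: "0 \<le> 2*(\<alpha>-1)*\<beta>*(\<alpha>+1)*\<beta>" using ab beta by simp
      have "P \<le> p*t^3" unfolding P_def using nn1 nn2 nn3 by linarith
      then have "t*P \<le> t*(p*t^3)" using tt0 by (intro mult_left_mono) auto
      also have "\<dots> = p * t^4" by (simp add: power_numeral_reduce)
      also have "\<dots> \<le> p * (4*(D t)\<^sup>2)"
      proof -
        have "(t\<^sup>2/2)\<^sup>2 \<le> (D t)\<^sup>2" using bg t2p by (intro power_mono) auto
        then have "t^4 \<le> 4*(D t)\<^sup>2" by (simp add: power_divide power_mult[symmetric] field_simps)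
        then show ?thesis using KC by (intro mult_left_mono) auto
      qed
      finally have "t * P / (D t)\<^sup>2 \<le> 4 * p" using D2 by (simp add: divide_le_eq mult_ac)
      then have "ad t - 2*t \<le> 4*p" using num by simp
      then have "(ad t - 2*t) * F t \<le> (4*p) * F t" using bg by (intro mult_right_mono) auto
      also have "\<dots> \<le> (K / t\<^sup>2 * a t) * F t"
      proof -
        have "4*p = K / t\<^sup>2 * (t\<^sup>2/2)" using t2p by (simp add: K_def field_simps)
        also have "\<dots> \<le> K / t\<^sup>2 * a t" using bg KC t2p by (intro mult_left_mono) auto
        finally show ?thesis using bg by (intro mult_right_mono) auto
      qed
      also have "\<dots> = K / t\<^sup>2 * (a t * F t)" by simp
      also have "\<dots> \<le> K / t\<^sup>2 * E t" using Eprops[OF tT] KC t2p by (intro mult_left_mono) auto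
      finally show ?thesis .
    qed
    have nz: "norm (z t) \<le> C\<phi> * \<phi> t" and nx: "t * norm (x' t) \<le> C\<phi> * \<phi> t" using zbound[OF tT] by auto
    have nx1: "norm (x' t) \<le> C\<phi> * \<phi> t"
      using nx tt0 by (smt (verit) mult_le_cancel_right1 norm_ge_zero)
    have phip: "\<phi> t \<ge> 1" using Eprops[OF tT] by (simp add: \<phi>_def)
    have we1: "t * norm (e t) \<le> Cw * G t" and we2: "L * t\<^sup>2 * norm (e t) \<le> Cw * G t"
      using w1 w2 T tT by auto
    have CS: "- (u \<bullet> w) \<le> norm u * norm w" for u w :: 'H
      using Cauchy_Schwarz_ineq2[of u w] by linarith
    have pp: "0 \<le> C\<phi> * \<phi> t" using KC phip by simp
    have b5: "- (a t * B t * (g t \<bullet> e t)) \<le> 2 * (\<gamma> + \<beta>) * (1 + \<gamma> + \<beta>) * C\<phi> * Cw * G t * \<phi> t"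
    proof -
      have aB: "0 \<le> a t * B t" using bg gamma by (intro mult_nonneg_nonneg) (auto intro: order.trans[rotated])
      have "norm (y t - xs) = norm (z t + B t *\<^sub>R x' t)" by (simp add: y_def z_def algebra_simps)
      also have "\<dots> \<le> norm (z t) + B t * norm (x' t)" using bg gamma norm_triangle_ineq[of "z t" "B t *\<^sub>R x' t"] by simp
      also have "\<dots> \<le> C\<phi> * \<phi> t + (\<gamma> + \<beta>) * (C\<phi> * \<phi> t)"
        using nz nx1 bg gamma by (intro add_mono mult_mono) auto
      finally have ny: "norm (y t - xs) \<le> (1 + \<gamma> + \<beta>) * (C\<phi> * \<phi> t)" by (simp add: algebra_simps)
      have ng: "norm (g t) \<le> L * ((1 + \<gamma> + \<beta>) * (C\<phi> * \<phi> t))"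
        using lip[of "y t" xs] gxs ny L order_trans mult_left_mono by (fastforce simp: g_def)
      have aBl: "a t * B t \<le> 2*t\<^sup>2 * (\<gamma> + \<beta>)" using bg gamma by (intro mult_mono) auto
      have "- (a t * B t * (g t \<bullet> e t)) = a t * B t * (- (g t \<bullet> e t))" by simp
      also have "\<dots> \<le> a t * B t * (norm (g t) * norm (e t))" using aB CS by (intro mult_left_mono) auto
      also have "\<dots> = (a t * B t) * norm (g t) * norm (e t)" by simp
      also have "\<dots> \<le> (2*t\<^sup>2 * (\<gamma> + \<beta>)) * (L * ((1 + \<gamma> + \<beta>) * (C\<phi> * \<phi> t))) * norm (e t)"
        using gamma beta by (intro mult_right_mono[OF mult_mono[OF aBl ng]]) auto
      also have "\<dots> = (2 * (\<gamma> + \<beta>) * (1 + \<gamma> + \<beta>) * (C\<phi> * \<phi> t)) * (L * t\<^sup>2 * norm (e t))"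
        by (simp add: algebra_simps)
      also have "\<dots> \<le> (2 * (\<gamma> + \<beta>) * (1 + \<gamma> + \<beta>) * (C\<phi> * \<phi> t)) * (Cw * G t)"
        using we2 pp gamma beta by (intro mult_left_mono) auto
      finally show ?thesis by (simp add: algebra_simps)
    qed
    have b6: "- (2*t*(z t \<bullet> e t)) \<le> 2 * (C\<phi> * \<phi> t) * (Cw * G t)"
    proof -
      have "- (2*t*(z t \<bullet> e t)) = 2*t*(- (z t \<bullet> e t))" by simp
      also have "\<dots> \<le> 2*t*(norm (z t) * norm (e t))" using CS tt0 by (intro mult_left_mono) auto
      also have "\<dots> = 2 * norm (z t) * (t * norm (e t))" by simp
      also have "\<dots> \<le> 2 * (C\<phi> * \<phi> t) * (Cw * G t)" using nz pp tt0 by (intro mult_mono[OF _ we1]) auto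
      finally show ?thesis .
    qed
    have b7: "- (t\<^sup>2*(x' t \<bullet> e t)) \<le> (C\<phi> * \<phi> t) * (Cw * G t)"
    proof -
      have "- (t\<^sup>2*(x' t \<bullet> e t)) = t\<^sup>2*(- (x' t \<bullet> e t))" by simp
      also have "\<dots> \<le> t\<^sup>2*(norm (x' t) * norm (e t))" using CS by (intro mult_left_mono) auto
      also have "\<dots> = (t * norm (x' t)) * (t * norm (e t))" by (simp add: power2_eq_square mult_ac)
      also have "\<dots> \<le> (C\<phi> * \<phi> t) * (Cw * G t)" using pp tt0 by (intro mult_mono[OF nx we1]) auto
      finally show ?thesis .
    qed
    have b1': "2*t*F t \<le> 2*t*((y t - xs) \<bullet> g t)" using b1 tt0 by simp
    have dist: "(ad t - 2*t) * F t = ad t * F t - 2*t*F t" by (simp add: algebra_simps)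
    have Cexp: "C * G t * \<phi> t = 2 * (\<gamma> + \<beta>) * (1 + \<gamma> + \<beta>) * C\<phi> * Cw * G t * \<phi> t
       + 2 * (C\<phi> * \<phi> t) * (Cw * G t) + (C\<phi> * \<phi> t) * (Cw * G t)" by (simp add: C_def algebra_simps)
    have "Ed t \<le> K / t\<^sup>2 * E t + C * G t * \<phi> t"
      unfolding Ed_eq using b1' b2 b3 b4 b5 b6 b7 dist Cexp by linarith
    moreover have "K / t\<^sup>2 * E t \<le> K / t\<^sup>2 * \<phi> t" using KC t2p
      by (intro mult_left_mono) (auto simp: \<phi>_def)
    ultimately show ?thesis by (simp add: algebra_simps)
  qed
  have "\<exists>M. \<forall>t\<ge>T. \<phi> t \<le> M"
  proof (rule gronwall_bdd[of t0 T \<phi> Ed K C G])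
    show "\<And>t. T \<le> t \<Longrightarrow> 0 < \<phi> t" using Eprops by (force simp: \<phi>_def)
  qed (use T KC dE Ed_le Gc Gi Gnn in auto)
  then obtain M where M: "\<And>t. t \<ge> T \<Longrightarrow> \<phi> t \<le> M" by blast
  show ?thesis
  proof (rule exI[of _ T], rule exI[of _ "max (2*M) (C\<phi> * M)"], intro allI impI conjI)
    fix t assume t: "t \<ge> T"
    have "t\<^sup>2 * F t \<le> 2 * (a t * F t)" using big[OF t] mult_right_mono[of "t\<^sup>2" "2 * a t" "F t"] by auto
    also have "\<dots> \<le> 2 * M" using Eprops[OF t] M[OF t] by (auto simp: \<phi>_def)
    finally show "t\<^sup>2 * (f (x t + betaf \<gamma> \<beta> t *\<^sub>R x' t) - f xs) \<le> max (2*M) (C\<phi> * M)"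
      by (simp add: F_def y_def Bb)
    have "C\<phi> * \<phi> t \<le> C\<phi> * M" using M[OF t] KC by (simp add: mult_left_mono)
    then show "norm (x t - xs) \<le> max (2*M) (C\<phi> * M)" "t * norm (x' t) \<le> max (2*M) (C\<phi> * M)"
      using zbound[OF t] by (auto simp: z_def)
  qed
qed


lemma bdd_split:
  fixes h :: "real \<Rightarrow> real"
  assumes "continuous_on {t0..T} h" "\<And>t. t \<ge> T \<Longrightarrow> h t \<le> M"
  shows "bdd_above (h ` {t0..})"
proof -
  have "bdd_above (h ` {t0..T})"
    by (rule bounded_imp_bdd_above[OF compact_imp_bounded[OF compact_continuous_image[OF assms(1) compact_Icc]]])
  then obtain M1 where M1: "\<And>t. t \<in> {t0..T} \<Longrightarrow> h t \<le> M1" unfolding bdd_above_def by blast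
  show ?thesis
  proof (rule bdd_aboveI[of _ "max M1 M"])
    fix u assume "u \<in> h ` {t0..}"
    then obtain t where t: "t \<ge> t0" "u = h t" by auto
    show "u \<le> max M1 M"
    proof (cases "t \<le> T")
      case True then show ?thesis using M1[of t] t by auto
    next
      case False then show ?thesis using assms(2)[of t] t by auto
    qed
  qed
qed

lemma coef_bounds:
  fixes \<alpha> \<gamma> \<beta> b t :: real
  assumes alpha: "\<alpha> > 3" and gamma: "\<gamma> > 0" and beta: "\<beta> \<ge> 0" and b: "0 < b" "b \<le> \<alpha> - 1"
    and t: "t \<ge> 2*\<alpha>*\<gamma> + 4*(\<alpha>+1)*\<beta> + 2"
  shows "t\<^sup>2/2 \<le> acoef \<alpha> \<gamma> \<beta> b t" "acoef \<alpha> \<gamma> \<beta> b t \<le> 2*t\<^sup>2"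
proof -
  define D where "D = t\<^sup>2 - \<alpha> * \<gamma> * t - \<beta> * (\<alpha> + 1)"
  define Nb where "Nb = t\<^sup>2 - b*\<gamma>*t - \<beta>*(2*\<alpha>+2-b)"
  have t1: "t \<ge> 1" using t alpha gamma beta
    by (smt (verit) mult_nonneg_nonneg)
  have h1: "t/2 - \<alpha>*\<gamma> \<ge> 2*(\<alpha>+1)*\<beta> + 1" using t by (simp add: algebra_simps)
  have "t*(t/2 - \<alpha>*\<gamma>) \<ge> 1*(2*(\<alpha>+1)*\<beta> + 1)"
    by (rule mult_mono) (use t1 h1 alpha beta in auto)
  then have h2: "t*(t/2 - \<alpha>*\<gamma>) \<ge> 2*(\<alpha>+1)*\<beta> + 1" by simp
  have "D - t\<^sup>2/2 = t*(t/2 - \<alpha>*\<gamma>) - (\<alpha>+1)*\<beta>" by (simp add: D_def power2_eq_square algebra_simps)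
  moreover have "(\<alpha>+1)*\<beta> \<ge> 0" using alpha beta by simp
  ultimately have Dg: "D \<ge> t\<^sup>2/2" using h2 by linarith
  have "b*\<gamma> \<le> \<alpha>*\<gamma>" using b gamma by (intro mult_right_mono) auto
  then have "t*(t/2 - b*\<gamma>) \<ge> t*(t/2 - \<alpha>*\<gamma>)" using t1 by (intro mult_left_mono) auto
  moreover have "\<beta>*(2*\<alpha>+2-b) \<le> 2*(\<alpha>+1)*\<beta>" using b beta by (simp add: algebra_simps)
  moreover have "Nb - t\<^sup>2/2 = t*(t/2 - b*\<gamma>) - \<beta>*(2*\<alpha>+2-b)" by (simp add: Nb_def power2_eq_square algebra_simps)
  ultimately have Ng: "Nb \<ge> t\<^sup>2/2" using h2 by linarith
  have "0 \<le> b*\<gamma>*t" "0 \<le> \<alpha>*\<gamma>*t" "0 \<le> \<beta>*(2*\<alpha>+2-b)" "0 \<le> \<beta> * (\<alpha> + 1)"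
    using b t1 alpha gamma beta by auto
  then have Nl: "Nb \<le> t\<^sup>2" and Dl: "D \<le> t\<^sup>2" by (auto simp: Nb_def D_def)
  have t2p: "t\<^sup>2 > 0" using t1 by simp
  then have Dp: "D > 0" using Dg by linarith
  have ac: "acoef \<alpha> \<gamma> \<beta> b t = t\<^sup>2 * Nb / D"
    unfolding acoef_def D_def[symmetric] using Dp
    by (simp add: field_simps Nb_def D_def power2_eq_square)
  have "acoef \<alpha> \<gamma> \<beta> b t \<le> 2*t\<^sup>2 \<longleftrightarrow> t\<^sup>2 * Nb \<le> (2*t\<^sup>2) * D" using Dp by (simp add: ac divide_le_eq)
  moreover have "t\<^sup>2 * Nb \<le> t\<^sup>2 * (2 * D)" using Nl Dg by (intro mult_left_mono) auto
  ultimately show "acoef \<alpha> \<gamma> \<beta> b t \<le> 2*t\<^sup>2" by simp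
  have "acoef \<alpha> \<gamma> \<beta> b t \<ge> t\<^sup>2/2 \<longleftrightarrow> t\<^sup>2/2 * D \<le> t\<^sup>2 * Nb" using Dp by (simp add: ac le_divide_eq)
  moreover have "t\<^sup>2 * (D / 2) \<le> t\<^sup>2 * Nb" using Ng Dl by (intro mult_left_mono) auto
  ultimately show "t\<^sup>2/2 \<le> acoef \<alpha> \<gamma> \<beta> b t" by simp
qed


theorem lemma2:
  fixes f :: "'H::{real_inner, complete_space} \<Rightarrow> real"
    and gradf :: "'H \<Rightarrow> 'H"
    and x x' x'' e :: "real \<Rightarrow> 'H"
    and xs :: 'H
    and t0 L \<alpha> \<gamma> \<beta> b :: real
  assumes t0: "t0 > 0"
    and convex: "convex_on UNIV f"
    and grad: "\<And>y. (f has_derivative (\<lambda>h. gradf y \<bullet> h)) (at y)"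
    and C1: "continuous_on UNIV gradf"
    and L: "L \<ge> 0"
    and lip: "\<And>y z. norm (gradf y - gradf z) \<le> L * norm (y - z)"
    and minimizer: "\<And>y. f xs \<le> f y"
    and alpha: "\<alpha> > 3" and gamma: "\<gamma> > 0" and beta: "\<beta> \<ge> 0"
    and b: "0 < b" "b \<le> \<alpha> - 1"
    and denom: "\<And>t. t \<ge> t0 \<Longrightarrow> t\<^sup>2 - \<alpha> * \<gamma> * t - \<beta> * (\<alpha> + 1) \<noteq> 0"
    and e_cont: "continuous_on {t0..} e"
    and e_L1: "set_integrable lborel {t0..} (\<lambda>t. norm (mfun L \<alpha> \<gamma> \<beta> b t *\<^sub>R e t))"
    and dx: "\<And>t. t \<ge> t0 \<Longrightarrow> (x has_vector_derivative x' t) (at t within {t0..})"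
    and ddx: "\<And>t. t \<ge> t0 \<Longrightarrow> (x' has_vector_derivative x'' t) (at t within {t0..})"
    and ode: "\<And>t. t \<ge> t0 \<Longrightarrow>
       x'' t + (\<alpha> / t) *\<^sub>R x' t + gradf (x t + betaf \<gamma> \<beta> t *\<^sub>R x' t) + e t = 0"
  shows "bdd_above ((\<lambda>t. acoef \<alpha> \<gamma> \<beta> b t * (f (x t + betaf \<gamma> \<beta> t *\<^sub>R x' t) - Inf (range f))
             + 1/2 * (norm (b *\<^sub>R (x t - xs) + t *\<^sub>R x' t))\<^sup>2
             + b * (\<alpha> - 1 - b) / 2 * (norm (x t - xs))\<^sup>2) ` {t0..})
      \<and> bdd_above ((\<lambda>t. t * norm (x' t)) ` {t0..})
      \<and> bdd_above ((\<lambda>t. norm (x t - xs)) ` {t0..})"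
proof -
  define G where "G t = norm (mfun L \<alpha> \<gamma> \<beta> b t *\<^sub>R e t)" for t
  define T1 where "T1 = max (t0 + 1) (2*\<alpha>*\<gamma> + 4*(\<alpha>+1)*\<beta> + 2)"
  define Cw where "Cw = max 1 (2 / \<gamma>)"
  have infeq: "Inf (range f) = f xs" by (rule cInf_eq_minimum) (use minimizer in auto)
  have interior: "at t within {t0..} = at t" if "t > t0" for t
    using that by (intro at_within_interior) auto
  have dx': "\<And>t. t > t0 \<Longrightarrow> (x has_vector_derivative x' t) (at t)"
    using dx interior by (metis less_imp_le)
  have ddx': "\<And>t. t > t0 \<Longrightarrow> (x' has_vector_derivative x'' t) (at t)"
    using ddx interior by (metis less_imp_le)
  have acont: "continuous_on {t0..} (\<lambda>t. acoef \<alpha> \<gamma> \<beta> b t)"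
    unfolding acoef_def using denom t0
    by (intro continuous_intros) auto
  have bcont: "continuous_on {t0..} (\<lambda>t. betaf \<gamma> \<beta> t)"
    unfolding betaf_def using t0 by (intro continuous_intros) auto
  have mcont: "continuous_on {t0..} (\<lambda>t. mfun L \<alpha> \<gamma> \<beta> b t)"
    unfolding mfun_def using acont bcont by (intro continuous_intros) auto
  have Gc: "continuous_on {t0..} G" unfolding G_def using mcont e_cont by (intro continuous_intros)
  have Gi: "G integrable_on {t0..}" using set_borel_integral_eq_integral(1)[OF e_L1] unfolding G_def[abs_def] .
  have Gnn: "\<And>t. t \<ge> t0 \<Longrightarrow> G t \<ge> 0" by (simp add: G_def)
  have Cw: "Cw \<ge> 0" by (simp add: Cw_def)
  have mge: "mfun L \<alpha> \<gamma> \<beta> b t \<ge> t" "mfun L \<alpha> \<gamma> \<beta> b t \<ge> L * \<bar>acoef \<alpha> \<gamma> \<beta> b t * betaf \<gamma> \<beta> t\<bar>" for t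
    by (auto simp: mfun_def)
  have w: "t * norm (e t) \<le> Cw * G t \<and> L * t\<^sup>2 * norm (e t) \<le> Cw * G t" if tT: "t \<ge> T1" for t
  proof -
    have tt: "t > t0" "t > 0" using tT t0 by (auto simp: T1_def)
    have cb: "t\<^sup>2/2 \<le> acoef \<alpha> \<gamma> \<beta> b t" using coef_bounds[OF alpha gamma beta b, of t] tT by (simp add: T1_def)
    have mpos: "mfun L \<alpha> \<gamma> \<beta> b t > 0" using mge(1)[of t] tt by linarith
    have Gm: "G t = mfun L \<alpha> \<gamma> \<beta> b t * norm (e t)" using mpos by (simp add: G_def)
    have bg: "betaf \<gamma> \<beta> t \<ge> \<gamma>" using beta tt by (simp add: betaf_def)
    have "L * t\<^sup>2 \<le> Cw * mfun L \<alpha> \<gamma> \<beta> b t"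
    proof -
      have "t\<^sup>2/2 * \<gamma> \<le> acoef \<alpha> \<gamma> \<beta> b t * betaf \<gamma> \<beta> t"
      proof (rule mult_mono[OF cb bg])
        show "0 \<le> acoef \<alpha> \<gamma> \<beta> b t" using cb order_trans[of 0 "t\<^sup>2/2"] by simp
      qed (use gamma in auto)
      also have "\<dots> \<le> \<bar>acoef \<alpha> \<gamma> \<beta> b t * betaf \<gamma> \<beta> t\<bar>" by simp
      finally have "L * (t\<^sup>2/2 * \<gamma>) \<le> L * \<bar>acoef \<alpha> \<gamma> \<beta> b t * betaf \<gamma> \<beta> t\<bar>" using L by (intro mult_left_mono)
      then have "L * (t\<^sup>2/2 * \<gamma>) \<le> mfun L \<alpha> \<gamma> \<beta> b t" using mge(2)[of t] by linarith
      then have "L * t\<^sup>2 \<le> (2 / \<gamma>) * mfun L \<alpha> \<gamma> \<beta> b t" using gamma by (simp add: field_simps)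
      also have "\<dots> \<le> Cw * mfun L \<alpha> \<gamma> \<beta> b t" using mpos by (intro mult_right_mono) (auto simp: Cw_def)
      finally show ?thesis .
    qed
    then have "L * t\<^sup>2 * norm (e t) \<le> Cw * mfun L \<alpha> \<gamma> \<beta> b t * norm (e t)" by (intro mult_right_mono) auto
    moreover have "t \<le> Cw * mfun L \<alpha> \<gamma> \<beta> b t"
    proof -
      have "1 * mfun L \<alpha> \<gamma> \<beta> b t \<le> Cw * mfun L \<alpha> \<gamma> \<beta> b t" using mpos by (intro mult_right_mono) (auto simp: Cw_def)
      then show ?thesis using mge(1)[of t] by linarith
    qed
    then have "t * norm (e t) \<le> Cw * mfun L \<alpha> \<gamma> \<beta> b t * norm (e t)" by (intro mult_right_mono) auto
    ultimately show ?thesis by (simp add: Gm mult.assoc)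
  qed
  obtain T M where TM: "\<And>t. t \<ge> T \<Longrightarrow> t\<^sup>2 * (f (x t + betaf \<gamma> \<beta> t *\<^sub>R x' t) - f xs) \<le> M
            \<and> norm (x t - xs) \<le> M \<and> t * norm (x' t) \<le> M"
  proof -
    have ode': "\<And>t. t > t0 \<Longrightarrow> x'' t + (\<alpha> / t) *\<^sub>R x' t + gradf (x t + betaf \<gamma> \<beta> t *\<^sub>R x' t) + e t = 0"
      using ode by simp
    have w1: "\<And>t. t \<ge> T1 \<Longrightarrow> t * norm (e t) \<le> Cw * G t" using w by blast
    have w2: "\<And>t. t \<ge> T1 \<Longrightarrow> L * t\<^sup>2 * norm (e t) \<le> Cw * G t" using w by blast
    from core[OF t0 convex grad L lip minimizer alpha gamma beta dx' ddx' ode' Gc Gi Gnn Cw w1 w2]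
    show ?thesis using that by blast
  qed
  define T' where "T' = max T T1"
  have T'1: "T' \<ge> T" "T' \<ge> T1" by (auto simp: T'_def)
  have xc: "continuous_on {t0..} x"
    using dx by (auto simp: continuous_on_eq_continuous_within intro: has_vector_derivative_continuous)
  have x'c: "continuous_on {t0..} x'"
    using ddx by (auto simp: continuous_on_eq_continuous_within intro: has_vector_derivative_continuous)
  have fc: "continuous_on UNIV f"
    using grad by (auto simp: continuous_on_eq_continuous_within intro: has_derivative_continuous)
  have yc: "continuous_on {t0..} (\<lambda>t. f (x t + betaf \<gamma> \<beta> t *\<^sub>R x' t))"
    by (rule continuous_on_compose2[OF fc]) (use xc x'c bcont in \<open>auto intro!: continuous_intros\<close>)
  have sub: "{t0..T'} \<subseteq> {t0..}" by auto
  show ?thesis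
  proof (intro conjI)
    show "bdd_above ((\<lambda>t. acoef \<alpha> \<gamma> \<beta> b t * (f (x t + betaf \<gamma> \<beta> t *\<^sub>R x' t) - Inf (range f))
             + 1/2 * (norm (b *\<^sub>R (x t - xs) + t *\<^sub>R x' t))\<^sup>2
             + b * (\<alpha> - 1 - b) / 2 * (norm (x t - xs))\<^sup>2) ` {t0..})"
    proof (rule bdd_split[of t0 T'])
      show "continuous_on {t0..T'} (\<lambda>t. acoef \<alpha> \<gamma> \<beta> b t * (f (x t + betaf \<gamma> \<beta> t *\<^sub>R x' t) - Inf (range f))
             + 1/2 * (norm (b *\<^sub>R (x t - xs) + t *\<^sub>R x' t))\<^sup>2
             + b * (\<alpha> - 1 - b) / 2 * (norm (x t - xs))\<^sup>2)"
        using continuous_on_subset[OF acont sub] continuous_on_subset[OF yc sub]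
          continuous_on_subset[OF xc sub] continuous_on_subset[OF x'c sub]
        by (intro continuous_intros) auto
    next
      fix t assume t: "t \<ge> T'"
      then have tT: "t \<ge> T" "t \<ge> T1" using T'1 by auto
      have tp: "t > 0" using tT t0 by (auto simp: T1_def)
      have M: "t\<^sup>2 * (f (x t + betaf \<gamma> \<beta> t *\<^sub>R x' t) - f xs) \<le> M" "norm (x t - xs) \<le> M" "t * norm (x' t) \<le> M"
        using TM[OF tT(1)] by auto
      have Fn: "f (x t + betaf \<gamma> \<beta> t *\<^sub>R x' t) - f xs \<ge> 0" using minimizer by simp
      have cb: "acoef \<alpha> \<gamma> \<beta> b t \<le> 2*t\<^sup>2" using coef_bounds[OF alpha gamma beta b, of t] tT by (simp add: T1_def)
      have A: "acoef \<alpha> \<gamma> \<beta> b t * (f (x t + betaf \<gamma> \<beta> t *\<^sub>R x' t) - f xs) \<le> 2 * M"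
      proof -
        have "acoef \<alpha> \<gamma> \<beta> b t * (f (x t + betaf \<gamma> \<beta> t *\<^sub>R x' t) - f xs)
             \<le> 2*t\<^sup>2 * (f (x t + betaf \<gamma> \<beta> t *\<^sub>R x' t) - f xs)" using cb Fn by (intro mult_right_mono)
        then show ?thesis using M(1) by linarith
      qed
      have M0: "M \<ge> 0" using M(2) norm_ge_zero order_trans by blast
      have "norm (b *\<^sub>R (x t - xs) + t *\<^sub>R x' t) \<le> b * norm (x t - xs) + t * norm (x' t)"
        using norm_triangle_ineq[of "b *\<^sub>R (x t - xs)" "t *\<^sub>R x' t"] b tp by simp
      also have "\<dots> \<le> b * M + M" using M b by (intro add_mono mult_left_mono) auto
      finally have nb: "norm (b *\<^sub>R (x t - xs) + t *\<^sub>R x' t) \<le> (b + 1) * M" by (simp add: algebra_simps)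
      have B1: "(norm (b *\<^sub>R (x t - xs) + t *\<^sub>R x' t))\<^sup>2 \<le> ((b + 1) * M)\<^sup>2"
        by (rule power_mono[OF nb norm_ge_zero])
      have "(norm (x t - xs))\<^sup>2 \<le> M\<^sup>2" by (rule power_mono[OF M(2) norm_ge_zero])
      moreover have "b * (\<alpha> - 1 - b) / 2 \<ge> 0" using b by simp
      ultimately have B2: "b * (\<alpha> - 1 - b) / 2 * (norm (x t - xs))\<^sup>2 \<le> b * (\<alpha> - 1 - b) / 2 * M\<^sup>2"
        by (intro mult_left_mono)
      show "acoef \<alpha> \<gamma> \<beta> b t * (f (x t + betaf \<gamma> \<beta> t *\<^sub>R x' t) - Inf (range f))
             + 1/2 * (norm (b *\<^sub>R (x t - xs) + t *\<^sub>R x' t))\<^sup>2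
             + b * (\<alpha> - 1 - b) / 2 * (norm (x t - xs))\<^sup>2
           \<le> 2 * M + 1/2 * ((b + 1) * M)\<^sup>2 + b * (\<alpha> - 1 - b) / 2 * M\<^sup>2"
        unfolding infeq using A B1 B2 by linarith
    qed
    show "bdd_above ((\<lambda>t. t * norm (x' t)) ` {t0..})"
      by (rule bdd_split[of t0 T' _ M]) (use continuous_on_subset[OF x'c sub] TM T'1 in \<open>auto intro!: continuous_intros\<close>)
    show "bdd_above ((\<lambda>t. norm (x t - xs)) ` {t0..})"
      by (rule bdd_split[of t0 T' _ M]) (use continuous_on_subset[OF xc sub] TM T'1 in \<open>auto intro!: continuous_intros\<close>)
  qed
qed


end
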